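(* Let $\eta>0$, $L>0$, $\nu>0$ with $\eta\le L$. Define error functions recursively by a scalar $e_0>0$ and $$e_k(\gamma_0,\dots,\gamma_{k-1})=(1-\eta\gamma_{k-1})\,e_{k-1}(\gamma_0,\dots,\gamma_{k-2})+\gamma_{k-1}^2\nu^2,\qquad k\ge1,$$ where $e_0$ satisfies $\frac{\eta}{2\nu^2}e_0\le\frac1L$. Let $\gamma_0^*=\frac{\eta}{2\nu^2}e_0$ and $\gamma_k^*=\gamma_{k-1}^*\big(1-\frac{\eta}{2}\gamma_{k-1}^*\big)$ for $k\ge1$. Then: (a) $e_k(\gamma_0^*,\dots,\gamma_{k-1}^* )=\frac{2\nu^2}{\eta}\gamma_k^*$ for all $k\ge0$; (b) for each $k\ge1$, $(\gamma_0^*,\dots,\gamma_{k-1}^* )$ minimizes $e_k$ over $\mathbb{G}_k=\{\alpha\in\mathbb{R}^k:0<\alpha_j\le\frac1L,\ j=1,\dots,k\}$; more precisely, for any $k\ge1$ and any $(\gamma_0,\dots,\gamma_{k-1})\in\mathbb{G}_k$, $e_k(\gamma_0,\dots,\gamma_{k-1})-e_k(\gamma_0^*,\dots,\gamma_{k-1}^* )\ge\nu^2(\gamma_{k-1}-\gamma_{k-1}^* )^2$; (c) $(\gamma_0^*,\dots,\gamma_{k-1}^* )$ is a stationary point of $e_k$ over $\mathbb{G}_k$.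
   Context: In the paper, $\eta$ is the strong convexity constant and $L$ the Lipschitz constant of the gradient of the objective $f$ (hence $\eta\le L$), and $\nu^2$ is an upper bound on the conditional second moments $\mathbb{E}[\|w_k\|^2\mid\mathcal{F}_k]$ of the stochastic gradient errors. *)

theory Defs
  imports "HOL-Analysis.Analysis"
begin

text \<open>Error recursion: e_0 = e0, e_k = (1 - eta * g_(k-1)) e_(k-1) + g_(k-1)^2 nu^2.
  A step-size vector (g_0,...,g_(k-1)) is represented by a sequence g :: nat => real,
  of which only the first k entries are used by err ... g k.\<close>
primrec err :: "real \<Rightarrow> real \<Rightarrow> real \<Rightarrow> (nat \<Rightarrow> real) \<Rightarrow> nat \<Rightarrow> real" where
  "err eta nu e0 g 0 = e0"
| "err eta nu e0 g (Suc k) = (1 - eta * g k) * err eta nu e0 g k + (g k)\<^sup>2 * nu\<^sup>2"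

primrec gstar :: "real \<Rightarrow> real \<Rightarrow> real \<Rightarrow> nat \<Rightarrow> real" where
  "gstar eta nu e0 0 = eta / (2 * nu\<^sup>2) * e0"
| "gstar eta nu e0 (Suc k) = gstar eta nu e0 k * (1 - eta / 2 * gstar eta nu e0 k)"

definition in_G :: "real \<Rightarrow> nat \<Rightarrow> (nat \<Rightarrow> real) \<Rightarrow> bool" where
  "in_G L k a \<longleftrightarrow> (\<forall>j<k. 0 < a j \<and> a j \<le> 1 / L)"

definition stationary_over ::
  "nat \<Rightarrow> ((nat \<Rightarrow> real) \<Rightarrow> real) \<Rightarrow> ((nat \<Rightarrow> real) \<Rightarrow> bool) \<Rightarrow> (nat \<Rightarrow> real) \<Rightarrow> bool" where
  "stationary_over k F S x \<longleftrightarrow> S x \<and>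
     (\<exists>grad :: nat \<Rightarrow> real.
        (\<forall>j<k. ((\<lambda>t. F (x(j := t))) has_real_derivative grad j) (at (x j))) \<and>
        (\<forall>y. S y \<longrightarrow> (\<Sum>j<k. grad j * (y j - x j)) \<ge> 0))"

end

theory Submission
  imports Defs
begin

lemma err_cong: "(\<forall>i<k. g i = h i) \<Longrightarrow> err eta nu e0 g k = err eta nu e0 h k"
  by (induction k) auto

lemma part_a:
  assumes "eta > 0" "nu > 0"
  shows "err eta nu e0 (gstar eta nu e0) k = 2 * nu\<^sup>2 / eta * gstar eta nu e0 k"
proof (induction k)
  case 0 then show ?case using assms by (simp add: field_simps)
next
  case (Suc k)
  have "err eta nu e0 (gstar eta nu e0) (Suc k) = (1 - eta * gstar eta nu e0 k) * (2 * nu\<^sup>2 / eta * gstar eta nu e0 k) + (gstar eta nu e0 k)\<^sup>2 * nu\<^sup>2"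
    using Suc by simp
  then show ?case using assms by (simp add: field_simps power2_eq_square)
qed

lemma gstar_G:
  assumes "eta > 0" "L > 0" "nu > 0" "eta \<le> L" "e0 > 0" "eta / (2 * nu\<^sup>2) * e0 \<le> 1 / L"
  shows "0 < gstar eta nu e0 k \<and> gstar eta nu e0 k \<le> 1 / L"
proof (induction k)
  case 0 then show ?case using assms by simp
next
  case (Suc k)
  define g where "g = gstar eta nu e0 k"
  have g: "0 < g" "g \<le> 1/L" using Suc g_def by auto
  have "eta * g \<le> eta * (1/L)" using g assms by (intro mult_left_mono) auto
  also have "\<dots> \<le> 1" using assms by (simp add: field_simps)
  finally have eg: "eta * g \<le> 1" .
  have p: "0 < 1 - eta/2*g" using eg by simp
  have "g * (1 - eta/2*g) \<le> g * 1" using g assms by (intro mult_left_mono) auto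
  then have "g * (1 - eta/2*g) \<le> 1/L" using g by linarith
  then show ?case using g p by (simp add: g_def[symmetric])
qed

lemma part_b:
  assumes "eta > 0" "L > 0" "nu > 0" "eta \<le> L" "e0 > 0" "eta / (2 * nu\<^sup>2) * e0 \<le> 1 / L"
  shows "in_G L (Suc k) g \<Longrightarrow> err eta nu e0 g (Suc k) - err eta nu e0 (gstar eta nu e0) (Suc k)
      \<ge> nu\<^sup>2 * (g k - gstar eta nu e0 k)\<^sup>2"
    and "in_G L k g \<Longrightarrow> err eta nu e0 g k \<ge> err eta nu e0 (gstar eta nu e0) k"
proof -
  have step: "err eta nu e0 g (Suc k) - err eta nu e0 (gstar eta nu e0) (Suc k)
      \<ge> nu\<^sup>2 * (g k - gstar eta nu e0 k)\<^sup>2"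
    if G: "in_G L (Suc k) g" and IH: "err eta nu e0 g k \<ge> err eta nu e0 (gstar eta nu e0) k" for k g
  proof -
    define E where "E = err eta nu e0 g k"
    define s where "s = gstar eta nu e0 k"
    define c where "c = 2 * nu\<^sup>2 / eta"
    have Es: "err eta nu e0 (gstar eta nu e0) k = c * s" using part_a assms c_def s_def by auto
    have g: "0 < g k" "g k \<le> 1/L" using G unfolding in_G_def by auto
    have "eta * g k \<le> eta * (1/L)" using g assms by (intro mult_left_mono) auto
    also have "\<dots> \<le> 1" using assms by (simp add: field_simps)
    finally have eg: "0 \<le> 1 - eta * g k" by simp
    have "E \<ge> c * s" using IH Es E_def by simp
    hence "(1 - eta * g k) * E \<ge> (1 - eta * g k) * (c * s)" using eg by (intro mult_left_mono)
    moreover have "(1 - eta * g k) * (c * s) + (g k)\<^sup>2 * nu\<^sup>2 - c * (s * (1 - eta / 2 * s))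
        = nu\<^sup>2 * (g k - s)\<^sup>2" using assms unfolding c_def by (simp add: field_simps power2_eq_square)
    moreover have "err eta nu e0 (gstar eta nu e0) (Suc k) = c * (s * (1 - eta / 2 * s))"
      using part_a[OF assms(1,3), of e0 "Suc k"] c_def s_def by simp
    ultimately show ?thesis by (simp add: E_def s_def)
  qed
  have mono: "in_G L k g \<Longrightarrow> err eta nu e0 g k \<ge> err eta nu e0 (gstar eta nu e0) k" for k
  proof (induction k)
    case 0 then show ?case by simp
  next
    case (Suc k)
    have "in_G L k g" using Suc.prems unfolding in_G_def by auto
    with Suc.IH have "err eta nu e0 g k \<ge> err eta nu e0 (gstar eta nu e0) k" by simp
    from step[OF Suc.prems this] show ?case by (smt (verit) zero_le_power2 mult_nonneg_nonneg)
  qed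
  show "in_G L (Suc k) g \<Longrightarrow> err eta nu e0 g (Suc k) - err eta nu e0 (gstar eta nu e0) (Suc k)
      \<ge> nu\<^sup>2 * (g k - gstar eta nu e0 k)\<^sup>2"
  proof -
    assume G: "in_G L (Suc k) g"
    hence "in_G L k g" unfolding in_G_def by auto
    from step[OF G mono[OF this]] show ?thesis .
  qed
  show "in_G L k g \<Longrightarrow> err eta nu e0 g k \<ge> err eta nu e0 (gstar eta nu e0) k" by (rule mono)
qed

lemma deriv0:
  assumes "eta > 0" "nu > 0"
  shows "((\<lambda>t. err eta nu e0 ((gstar eta nu e0)(j := t)) k) has_real_derivative 0) (at (gstar eta nu e0 j))"
proof (induction k)
  case 0 then show ?case by simp
next
  case (Suc k)
  let ?x = "gstar eta nu e0"
  show ?case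
  proof (cases "j = k")
    case True
    define E where "E = err eta nu e0 ?x k"
    have eq: "(\<lambda>t. err eta nu e0 (?x(j := t)) (Suc k)) = (\<lambda>t. (1 - eta*t)*E + t^2*nu^2)"
    proof
      fix t
      have "err eta nu e0 (?x(j := t)) k = E" unfolding E_def using True by (intro err_cong) auto
      then show "err eta nu e0 (?x(j := t)) (Suc k) = (1 - eta*t)*E + t^2*nu^2" using True by simp
    qed
    have d: "((\<lambda>t. (1 - eta*t)*E + t^2*nu^2) has_real_derivative (-eta*E + 2*?x k*nu^2)) (at (?x j))"
      using True by (auto intro!: derivative_eq_intros)
    have z: "-eta*E + 2*?x k*nu^2 = 0" using part_a[OF assms, of e0 k] assms unfolding E_def
      by (simp add: field_simps)
    show ?thesis unfolding eq using d unfolding z .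
  next
    case False
    have eq: "(\<lambda>t. err eta nu e0 (?x(j := t)) (Suc k)) =
       (\<lambda>t. (1 - eta * ?x k) * err eta nu e0 (?x(j := t)) k + (?x k)\<^sup>2 * nu\<^sup>2)"
      using False by auto
    have "((\<lambda>t. (1 - eta * ?x k) * err eta nu e0 (?x(j := t)) k + (?x k)\<^sup>2 * nu\<^sup>2)
        has_real_derivative ((1 - eta * ?x k) * 0 + 0)) (at (?x j))"
      by (rule DERIV_add[OF DERIV_cmult[OF Suc.IH] DERIV_const])
    then show ?thesis unfolding eq by simp
  qed
qed

theorem proposition2:
  fixes eta L nu e0 :: real
  assumes "eta > 0" and "L > 0" and "nu > 0" and "eta \<le> L"
    and "e0 > 0" and "eta / (2 * nu\<^sup>2) * e0 \<le> 1 / L"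
  shows "(\<forall>k. err eta nu e0 (gstar eta nu e0) k = 2 * nu\<^sup>2 / eta * gstar eta nu e0 k)
    \<and> (\<forall>k\<ge>1. in_G L k (gstar eta nu e0) \<and>
         (\<forall>g. in_G L k g \<longrightarrow>
            err eta nu e0 g k - err eta nu e0 (gstar eta nu e0) k
              \<ge> nu\<^sup>2 * (g (k - 1) - gstar eta nu e0 (k - 1))\<^sup>2))
    \<and> (\<forall>k\<ge>1. stationary_over k (\<lambda>g. err eta nu e0 g k) (in_G L k) (gstar eta nu e0))"
proof (intro conjI allI impI)
  fix k show "err eta nu e0 (gstar eta nu e0) k = 2 * nu\<^sup>2 / eta * gstar eta nu e0 k"
    using part_a assms by auto
next
  fix k :: nat
  have G: "in_G L k (gstar eta nu e0)" for k
    using gstar_G[OF assms] unfolding in_G_def by auto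
  show "in_G L k (gstar eta nu e0)" by (rule G)
  {
    fix g assume "1 \<le> k" "in_G L k g"
    then obtain m where m: "k = Suc m" by (cases k) auto
    with part_b(1)[OF assms, of m g] \<open>in_G L k g\<close>
    show "err eta nu e0 g k - err eta nu e0 (gstar eta nu e0) k
              \<ge> nu\<^sup>2 * (g (k - 1) - gstar eta nu e0 (k - 1))\<^sup>2" by simp
  }
  show "stationary_over k (\<lambda>g. err eta nu e0 g k) (in_G L k) (gstar eta nu e0)"
    unfolding stationary_over_def
    by (intro conjI G exI[of _ "\<lambda>_. 0"]) (auto intro: deriv0[OF assms(1,3)])
qed

end
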